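(* Let $D\mathcal{M}$ be an $\ell c$DCB system, linearly conjugate via $Q=\mathrm{diag}(q_1,\dots,q_n)$ to the DCB system $D\tilde{\mathcal{M}}$, and let $\theta\in C([-\tau,0];\mathbb{R}^n_{>0})$. Then the set $\mathcal H_\theta$ contains exactly one positive equilibrium of $D\mathcal{M}$; namely $x^*=Q\tilde x^*$, where $\tilde x^*$ is the unique positive equilibrium of $D\tilde{\mathcal{M}}$ in its stoichiometric compatibility class containing $Q^{-1}\theta$.
   Context: For $x,y\in\mathbb{R}^n$ with $x\ge 0$, write $x^{y}=\prod_{j=1}^n x_j^{y_j}$. A delayed mass-action system on species $X_1,\dots,X_n$ consists of reactions $R_i: y_{\cdot i}\to y'_{\cdot i}$, $i=1,\dots,r$, with complexes $y_{\cdot i},y'_{\cdot i}\in\mathbb{R}^n_{\ge0}$, rate constants $\kappa_i>0$ and delays $\tau_i\ge0$; with $\tau\ge\max_i\tau_i$, its dynamics is the delay differential equation $\dot x(t)=F(x_t):=\sum_{i=1}^r\kappa_i\big[x(t-\tau_i)^{y_{\cdot i}}y'_{\cdot i}-x(t)^{y_{\cdot i}}y_{\cdot i}\big]$, $t\ge 0$, where $x_t(s)=x(t+s)$, $s\in[-\tau,0]$, with initial function $\theta\in C([-\tau,0];\mathbb{R}^n_{\ge0})$. Its stoichiometric subspace is $\mathscr S=\mathrm{span}\{y'_{\cdot i}-y_{\cdot i}\}$. A positive equilibrium is $x^*\in\mathbb{R}^n_{>0}$ with $\sum_i\kappa_i (x^* )^{y_{\cdot i}}(y'_{\cdot i}-y_{\cdot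 i})=0$ (viewed as a constant function). The stoichiometric compatibility class containing $\theta$ is $\mathcal P_\theta=\{\psi\in C([-\tau,0];\mathbb{R}^n_{\ge0}): c_a(\psi)=c_a(\theta)\ \forall a\in\mathscr S^\perp\}$, where $c_a(\psi)=a^\top\big[\psi(0)+\sum_{i=1}^r\big(\kappa_i\int_{-\tau_i}^0\psi(s)^{y_{\cdot i}}ds\big)y_{\cdot i}\big]$. A vector $\bar x\in\mathbb{R}^n_{>0}$ is a complex balanced equilibrium if for every complex $\eta$ of the network $\sum_{i: y_{\cdot i}=\eta}\kappa_i\bar x^{y_{\cdot i}}=\sum_{i: y'_{\cdot i}=\eta}\kappa_i\bar x^{y_{\cdot i}}$. A delayed complex balanced (DCB) system is a delayed mass-action system admitting a positive complex balanced equilibrium; each stoichiometric compatibility class $\mathcal P_\theta$ of a DCB system with $\theta$ positive contains exactly one positive equilibrium. Two delayed mass-action systems $D\mathcal{M}$ (right-hand side $F$) and $D\tilde{\mathcal{M}}$ (right-hand side $\tilde F$) on the same species are linearly conjugate via a positive diagonal matrix $Q$ if $F(Q\psi)=Q\tilde F(\psi)$ for all $\psi\in C([-\tau,0];\mathbb{R}^n_{>0})$. An $\ell c$DCB system is one linearly conjugate via some positive diagonal matrix to a DCB system. If $D\tilde{\mathcal{M}}$ has reactions $y_{\cdot i}\to\tilde y'_{\cdot i}$, rate constants $\tilde\kappa_i$, delays $\tau_i$ ($i=1,\dots,\tilde r$) and stoichiometric subspace $\tilde{\mathscr S}$, define $h_a(\psi)=a^\top\big[\psi(0)+\sum_{i=1}^{\tilde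 r}\big(\tilde\kappa_i\prod_{j=1}^n q_j^{-y_{ji}}\int_{-\tau_i}^0\psi(s)^{y_{\cdot i}}ds\big)Qy_{\cdot i}\big]$ and $\mathcal H_\theta=\{\psi\in C([-\tau,0];\mathbb{R}^n_{\ge0}): h_a(\psi)=h_a(\theta)\ \forall a\in(Q^{-1})^\top\tilde{\mathscr S}^\perp\}$. *)

theory Defs
  imports "HOL-Analysis.Analysis"
begin

text \<open>A delayed mass-action system is given by the number of reactions r, and for each
  reaction index i < r its source complex, product complex, rate constant and delay.\<close>

record 'n dms =
  nreac :: nat
  src   :: "nat \<Rightarrow> real^'n"
  prd   :: "nat \<Rightarrow> real^'n"
  rate  :: "nat \<Rightarrow> real"
  delay :: "nat \<Rightarrow> real"

text \<open>Monomial x^y = prod_j x_j^{y_j}, with the convention 0^0 = 1.\<close>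
definition mpow :: "real^'n \<Rightarrow> real^'n \<Rightarrow> real" where
  "mpow x y = (\<Prod>j\<in>UNIV. if y $ j = 0 then 1 else x $ j powr (y $ j))"

definition valid_dms :: "real \<Rightarrow> 'n::finite dms \<Rightarrow> bool" where
  "valid_dms \<tau> M \<longleftrightarrow> 0 \<le> \<tau> \<and>
     (\<forall>i<nreac M. 0 < rate M i \<and> 0 \<le> delay M i \<and> delay M i \<le> \<tau> \<and>
        (\<forall>j. 0 \<le> src M i $ j) \<and> (\<forall>j. 0 \<le> prd M i $ j))"

definition Cnn :: "real \<Rightarrow> (real \<Rightarrow> real^'n::finite) set" where
  "Cnn \<tau> = {\<psi>. continuous_on {-\<tau>..0} \<psi> \<and> (\<forall>s\<in>{-\<tau>..0}. \<forall>j. 0 \<le> \<psi> s $ j)}"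

definition Cpos :: "real \<Rightarrow> (real \<Rightarrow> real^'n::finite) set" where
  "Cpos \<tau> = {\<psi>. continuous_on {-\<tau>..0} \<psi> \<and> (\<forall>s\<in>{-\<tau>..0}. \<forall>j. 0 < \<psi> s $ j)}"

definition rhs :: "'n::finite dms \<Rightarrow> (real \<Rightarrow> real^'n) \<Rightarrow> real^'n" where
  "rhs M \<psi> = (\<Sum>i<nreac M. rate M i *\<^sub>R
      (mpow (\<psi> (- delay M i)) (src M i) *\<^sub>R prd M i - mpow (\<psi> 0) (src M i) *\<^sub>R src M i))"

definition diagmul :: "real^'n::finite \<Rightarrow> real^'n \<Rightarrow> real^'n" where
  "diagmul q x = (\<chi> j. q $ j * x $ j)"

definition stoich :: "'n::finite dms \<Rightarrow> (real^'n) set" where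
  "stoich M = span {prd M i - src M i | i. i < nreac M}"

definition orth :: "(real^'n::finite) set \<Rightarrow> (real^'n) set" where
  "orth S = {a. \<forall>s\<in>S. a \<bullet> s = 0}"

definition pos_equilibrium :: "'n::finite dms \<Rightarrow> real^'n \<Rightarrow> bool" where
  "pos_equilibrium M x \<longleftrightarrow> (\<forall>j. 0 < x $ j) \<and>
     (\<Sum>i<nreac M. (rate M i * mpow x (src M i)) *\<^sub>R (prd M i - src M i)) = 0"

definition complexes :: "'n::finite dms \<Rightarrow> (real^'n) set" where
  "complexes M = {src M i | i. i < nreac M} \<union> {prd M i | i. i < nreac M}"

definition complex_balanced :: "'n::finite dms \<Rightarrow> real^'n \<Rightarrow> bool" where
  "complex_balanced M x \<longleftrightarrow> (\<forall>j. 0 < x $ j) \<and>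
     (\<forall>\<eta>\<in>complexes M.
        (\<Sum>i\<in>{i. i < nreac M \<and> src M i = \<eta>}. rate M i * mpow x (src M i)) =
        (\<Sum>i\<in>{i. i < nreac M \<and> prd M i = \<eta>}. rate M i * mpow x (src M i)))"

definition DCB :: "real \<Rightarrow> 'n::finite dms \<Rightarrow> bool" where
  "DCB \<tau> M \<longleftrightarrow> valid_dms \<tau> M \<and> (\<exists>x. complex_balanced M x)"

definition cfun :: "'n::finite dms \<Rightarrow> real^'n \<Rightarrow> (real \<Rightarrow> real^'n) \<Rightarrow> real" where
  "cfun M a \<psi> = a \<bullet> (\<psi> 0 + (\<Sum>i<nreac M.
      (rate M i * integral {- delay M i..0} (\<lambda>s. mpow (\<psi> s) (src M i))) *\<^sub>R src M i))"

definition compat_class :: "real \<Rightarrow> 'n::finite dms \<Rightarrow> (real \<Rightarrow> real^'n) \<Rightarrow> (real \<Rightarrow> real^'n) set" where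
  "compat_class \<tau> M \<theta> = {\<psi>\<in>Cnn \<tau>. \<forall>a\<in>orth (stoich M). cfun M a \<psi> = cfun M a \<theta>}"

definition lin_conj :: "real \<Rightarrow> 'n::finite dms \<Rightarrow> 'n dms \<Rightarrow> real^'n \<Rightarrow> bool" where
  "lin_conj \<tau> M Mt q \<longleftrightarrow> (\<forall>j. 0 < q $ j) \<and>
     (\<forall>\<psi>\<in>Cpos \<tau>. rhs M (\<lambda>s. diagmul q (\<psi> s)) = diagmul q (rhs Mt \<psi>))"

definition hfun :: "'n::finite dms \<Rightarrow> real^'n \<Rightarrow> real^'n \<Rightarrow> (real \<Rightarrow> real^'n) \<Rightarrow> real" where
  "hfun Mt q a \<psi> = a \<bullet> (\<psi> 0 + (\<Sum>i<nreac Mt.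
      (rate Mt i * (\<Prod>j\<in>UNIV. q $ j powr (- (src Mt i $ j))) *
        integral {- delay Mt i..0} (\<lambda>s. mpow (\<psi> s) (src Mt i))) *\<^sub>R diagmul q (src Mt i)))"

definition Hset :: "real \<Rightarrow> 'n::finite dms \<Rightarrow> real^'n \<Rightarrow> (real \<Rightarrow> real^'n) \<Rightarrow> (real \<Rightarrow> real^'n) set" where
  "Hset \<tau> Mt q \<theta> = {\<psi>\<in>Cnn \<tau>.
     \<forall>a\<in>{diagmul (\<chi> j. inverse (q $ j)) b | b. b \<in> orth (stoich Mt)}.
        hfun Mt q a \<psi> = hfun Mt q a \<theta>}"

end

theory Submission
  imports Defs
begin


definition lnv :: "real^'n::finite \<Rightarrow> real^'n" where "lnv x = (\<chi> j. ln (x $ j))"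
definition expv :: "real^'n::finite \<Rightarrow> real^'n" where "expv u = (\<chi> j. exp (u $ j))"

lemma mpow_pos:
  assumes "\<forall>j. 0 < x $ j"
  shows "mpow x y = exp (y \<bullet> lnv x)"
proof -
  have "mpow x y = (\<Prod>j\<in>UNIV. exp (y $ j * ln (x $ j)))"
    unfolding mpow_def
  proof (intro prod.cong refl)
    fix j :: 'a have "x $ j \<noteq> 0" using assms[rule_format, of j] by simp
    thus "(if y $ j = 0 then 1 else x $ j powr y $ j) = exp (y $ j * ln (x $ j))"
      by (simp add: powr_def)
  qed
  also have "\<dots> = exp (\<Sum>j\<in>UNIV. y $ j * ln (x $ j))" by (simp add: exp_sum)
  finally show ?thesis by (simp add: inner_vec_def lnv_def)
qed

lemma mpow_expv: "mpow (expv u) y = exp (y \<bullet> u)"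
  by (subst mpow_pos) (auto simp: expv_def lnv_def)

lemma expv_lnv: "\<forall>j. 0 < x $ j \<Longrightarrow> expv (lnv x) = x"
  by (simp add: expv_def lnv_def vec_eq_iff)

lemma mpow_nonneg: "0 \<le> mpow x y"
  unfolding mpow_def by (intro prod_nonneg) auto

lemma exp_strict: assumes "x \<noteq> 0" shows "1 + x < exp (x::real)"
proof (cases "1 + x/2 \<ge> 0")
  case True
  have "1 + x/2 \<le> exp (x/2)" by simp
  hence "(1 + x/2)^2 \<le> exp (x/2) ^ 2" using True by (intro power_mono) auto
  also have "exp (x/2)^2 = exp x" by (simp add: power2_eq_square exp_add[symmetric])
  finally have "(1+x/2)^2 \<le> exp x" .
  moreover have "0 < x * x" using assms by (metis linorder_neqE_linordered_idom mult_neg_neg mult_pos_pos)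
  hence "1 + x < (1+x/2)^2" by (simp add: power2_eq_square algebra_simps)
  ultimately show ?thesis by simp
next
  case False
  hence "1 + x < 0" by simp
  then show ?thesis using exp_gt_zero[of x] by linarith
qed

lemma exp_conv: "exp a * (b - a) \<le> exp b - exp (a::real)"
proof -
  have "1 + (b - a) \<le> exp (b - a)" by simp
  hence "exp a * (1 + (b-a)) \<le> exp a * exp (b-a)" by simp
  thus ?thesis by (simp add: exp_add[symmetric] algebra_simps)
qed

lemma exp_conv_eq: "exp a * (b - a) = exp b - exp (a::real) \<Longrightarrow> a = b"
proof (rule ccontr)
  assume h: "exp a * (b - a) = exp b - exp a" "a \<noteq> b"
  have "1 + (b - a) < exp (b - a)" using h(2) by (intro exp_strict) simp
  hence "exp a * (1 + (b-a)) < exp a * exp (b-a)" by simp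
  thus False using h(1) by (simp add: exp_add[symmetric] algebra_simps)
qed

lemma exp_mono_prod: "0 \<le> (exp p - exp q) * (p - (q::real))"
proof (cases "p \<le> q")
  case True then show ?thesis by (intro mult_nonpos_nonpos) auto
next
  case False then show ?thesis by (intro mult_nonneg_nonneg) auto
qed

lemma orth_span: "orth (span B) = orth B"
proof
  show "orth (span B) \<subseteq> orth B" unfolding orth_def using span_base by blast
next
  show "orth B \<subseteq> orth (span B)"
  proof
    fix a assume a: "a \<in> orth B"
    have "span B \<subseteq> {s. a \<bullet> s = 0}"
      apply (rule span_minimal)
      using a apply (auto simp: orth_def)[1]
      by (auto simp: subspace_def inner_add_right)
    thus "a \<in> orth (span B)" unfolding orth_def by auto
  qed
qed

lemma orth_stoich: "orth (stoich M) = {a. \<forall>i<nreac M. a \<bullet> (prd M i - src M i) = 0}"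
  unfolding stoich_def orth_span by (auto simp: orth_def)



lemma complexes_eq: "complexes M = src M ` {..<nreac M} \<union> prd M ` {..<nreac M}"
  by (auto simp: complexes_def)

lemma finite_complexes: "finite (complexes M)"
  by (simp add: complexes_eq)

lemma group_by:
  fixes g :: "real^'n::finite \<Rightarrow> 'b::real_vector" and h :: "nat \<Rightarrow> real^'n"
  assumes "h ` {..<nreac M} \<subseteq> complexes M"
  shows "(\<Sum>i<nreac M. f i *\<^sub>R g (h i)) =
         (\<Sum>\<eta>\<in>complexes M. (\<Sum>i\<in>{i. i < nreac M \<and> h i = \<eta>}. f i) *\<^sub>R g \<eta>)"
proof -
  have "(\<Sum>i<nreac M. f i *\<^sub>R g (h i)) =
     (\<Sum>\<eta>\<in>complexes M. \<Sum>i\<in>{i. i \<in> {..<nreac M} \<and> h i = \<eta>}. f i *\<^sub>R g (h i))"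
    by (rule sum.group[symmetric]) (use assms finite_complexes in auto)
  also have "\<dots> = (\<Sum>\<eta>\<in>complexes M. (\<Sum>i\<in>{i. i < nreac M \<and> h i = \<eta>}. f i) *\<^sub>R g \<eta>)"
    by (intro sum.cong refl) (auto simp: scaleR_sum_left)
  finally show ?thesis .
qed

lemma cb_swap:
  fixes g :: "real^'n::finite \<Rightarrow> 'b::real_vector"
  assumes "complex_balanced M x"
  shows "(\<Sum>i<nreac M. (rate M i * mpow x (src M i)) *\<^sub>R g (prd M i)) =
         (\<Sum>i<nreac M. (rate M i * mpow x (src M i)) *\<^sub>R g (src M i))"
proof -
  have cb: "\<And>\<eta>. \<eta> \<in> complexes M \<Longrightarrow>
     (\<Sum>i\<in>{i. i < nreac M \<and> prd M i = \<eta>}. rate M i * mpow x (src M i)) =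
     (\<Sum>i\<in>{i. i < nreac M \<and> src M i = \<eta>}. rate M i * mpow x (src M i))"
    using assms unfolding complex_balanced_def by auto
  show ?thesis
    apply (subst group_by, force simp: complexes_eq)
    apply (subst group_by, force simp: complexes_eq)
    apply (intro sum.cong refl) using cb by simp
qed

definition eqsum :: "'n::finite dms \<Rightarrow> real^'n \<Rightarrow> real^'n" where
  "eqsum M x = (\<Sum>i<nreac M. (rate M i * mpow x (src M i)) *\<^sub>R (prd M i - src M i))"

lemma pos_eq_alt: "pos_equilibrium M x \<longleftrightarrow> (\<forall>j. 0 < x $ j) \<and> eqsum M x = 0"
  by (simp add: pos_equilibrium_def eqsum_def)

lemma eq_from_orth:
  assumes cb: "complex_balanced M xb"
    and w: "u - lnv xb \<in> orth (stoich M)"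
  shows "eqsum M (expv u) = 0"
proof -
  define w where "w = u - lnv xb"
  have xb: "\<forall>j. 0 < xb $ j" using cb by (simp add: complex_balanced_def)
  have wo: "\<And>i. i < nreac M \<Longrightarrow> w \<bullet> prd M i = w \<bullet> src M i"
    using w unfolding orth_stoich w_def by (auto simp: inner_diff_right)
  have u: "u = lnv xb + w" by (simp add: w_def)
  have "eqsum M (expv u) = (\<Sum>i<nreac M. (rate M i * mpow xb (src M i)) *\<^sub>R
        (exp (w \<bullet> prd M i) *\<^sub>R prd M i - exp (w \<bullet> src M i) *\<^sub>R src M i))"
    unfolding eqsum_def mpow_expv
  proof (intro sum.cong refl)
    fix i assume "i \<in> {..<nreac M}"
    hence e: "w \<bullet> prd M i = w \<bullet> src M i" using wo by simp
    show "(rate M i * exp (src M i \<bullet> u)) *\<^sub>R (prd M i - src M i) =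
       (rate M i * mpow xb (src M i)) *\<^sub>R
        (exp (w \<bullet> prd M i) *\<^sub>R prd M i - exp (w \<bullet> src M i) *\<^sub>R src M i)"
      unfolding e mpow_pos[OF xb] u
      by (simp add: inner_add_right inner_commute exp_add scaleR_diff_right algebra_simps)
  qed
  also have "\<dots> = (\<Sum>i<nreac M. (rate M i * mpow xb (src M i)) *\<^sub>R (\<lambda>\<eta>. exp (w \<bullet> \<eta>) *\<^sub>R \<eta>) (prd M i))
     - (\<Sum>i<nreac M. (rate M i * mpow xb (src M i)) *\<^sub>R (\<lambda>\<eta>. exp (w \<bullet> \<eta>) *\<^sub>R \<eta>) (src M i))"
    by (simp add: scaleR_diff_right sum_subtractf)
  also have "\<dots> = 0" using cb_swap[OF cb, of "\<lambda>\<eta>. exp (w \<bullet> \<eta>) *\<^sub>R \<eta>"] by simp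
  finally show ?thesis .
qed

lemma orth_from_eq:
  assumes cb: "complex_balanced M xb" and v: "valid_dms \<tau> M"
    and e: "eqsum M (expv u) = 0"
  shows "u - lnv xb \<in> orth (stoich M)"
proof -
  define w where "w = u - lnv xb"
  have xb: "\<forall>j. 0 < xb $ j" using cb by (simp add: complex_balanced_def)
  define f where "f i = rate M i * mpow xb (src M i)" for i
  define a where "a i = w \<bullet> src M i" for i
  define b where "b i = w \<bullet> prd M i" for i
  have fpos: "\<And>i. i < nreac M \<Longrightarrow> 0 < f i"
    using v unfolding valid_dms_def f_def mpow_pos[OF xb] by auto
  have u: "u = lnv xb + w" by (simp add: w_def)
  have "0 = w \<bullet> eqsum M (expv u)" using e by simp
  also have "\<dots> = (\<Sum>i<nreac M. f i * exp (a i) * (b i - a i))"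
    unfolding eqsum_def mpow_expv inner_sum_right
    by (intro sum.cong refl) (simp add: f_def a_def b_def u mpow_pos[OF xb] inner_add_right
        inner_commute exp_add inner_diff_right algebra_simps)
  finally have s1: "(\<Sum>i<nreac M. f i * exp (a i) * (b i - a i)) = 0" by simp
  have s2: "(\<Sum>i<nreac M. f i * exp (b i)) = (\<Sum>i<nreac M. f i * exp (a i))"
    using cb_swap[OF cb, of "\<lambda>\<eta>. exp (w \<bullet> \<eta>)"] by (simp add: f_def a_def b_def)
  have "(\<Sum>i<nreac M. f i * (exp (b i) - exp (a i) - exp (a i) * (b i - a i))) =
     (\<Sum>i<nreac M. f i * exp (b i)) - (\<Sum>i<nreac M. f i * exp (a i)) - (\<Sum>i<nreac M. f i * exp (a i) * (b i - a i))"
  proof -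
    have "(\<Sum>i<nreac M. f i * (exp (b i) - exp (a i) - exp (a i) * (b i - a i))) =
      (\<Sum>i<nreac M. f i * exp (b i) - f i * exp (a i) - f i * exp (a i) * (b i - a i))"
      by (intro sum.cong refl) (simp add: algebra_simps)
    thus ?thesis by (simp only: sum_subtractf)
  qed
  also have "\<dots> = 0" using s1 s2 by simp
  finally have s3: "(\<Sum>i<nreac M. f i * (exp (b i) - exp (a i) - exp (a i) * (b i - a i))) = 0" .
  have nn: "\<forall>i\<in>{..<nreac M}. 0 \<le> f i * (exp (b i) - exp (a i) - exp (a i) * (b i - a i))"
  proof
    fix i assume "i \<in> {..<nreac M}"
    thus "0 \<le> f i * (exp (b i) - exp (a i) - exp (a i) * (b i - a i))"
      using fpos[of i] exp_conv[of "a i" "b i"] by (intro mult_nonneg_nonneg) auto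
  qed
  have "\<forall>i\<in>{..<nreac M}. f i * (exp (b i) - exp (a i) - exp (a i) * (b i - a i)) = 0"
    using sum_nonneg_eq_0_iff[of "{..<nreac M}" "\<lambda>i. f i * (exp (b i) - exp (a i) - exp (a i) * (b i - a i))"] nn s3 by blast
  hence "\<forall>i<nreac M. a i = b i"
    using fpos exp_conv_eq by (metis eq_iff_diff_eq_0 lessThan_iff mult_eq_0_iff order_less_irrefl)
  thus ?thesis unfolding orth_stoich w_def[symmetric] by (auto simp: a_def b_def inner_diff_right)
qed



definition Gv :: "'n::finite dms \<Rightarrow> real^'n \<Rightarrow> real^'n" where
  "Gv M x = x + (\<Sum>i<nreac M. (rate M i * delay M i * mpow x (src M i)) *\<^sub>R src M i)"

lemma cfun_const:
  assumes "valid_dms \<tau> M"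
  shows "cfun M a (\<lambda>_. x) = a \<bullet> Gv M x"
proof -
  have "\<And>i. i < nreac M \<Longrightarrow> integral {- delay M i..0} (\<lambda>s. mpow x (src M i)) = delay M i * mpow x (src M i)"
    using assms by (auto simp: valid_dms_def)
  thus ?thesis unfolding cfun_def Gv_def
    by (intro arg_cong[where f="\<lambda>v. a \<bullet> v"] arg_cong2[where f="(+)"] refl sum.cong) auto
qed

lemma ln_mono_prod:
  assumes "0 < a" "0 < (b::real)"
  shows "0 \<le> (ln a - ln b) * (a - b)" and "(ln a - ln b) * (a - b) = 0 \<Longrightarrow> a = b"
proof -
  show "0 \<le> (ln a - ln b) * (a - b)"
  proof (cases "a \<le> b")
    case True then show ?thesis using assms by (intro mult_nonpos_nonpos) auto
  next
    case False then show ?thesis using assms by (intro mult_nonneg_nonneg) auto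
  qed
  assume "(ln a - ln b) * (a - b) = 0"
  then show "a = b" using assms by auto
qed

lemma uniq_core:
  assumes v: "valid_dms \<tau> M"
    and x1: "\<forall>j. 0 < x1 $ j" and x2: "\<forall>j. 0 < x2 $ j"
    and w: "lnv x1 - lnv x2 \<in> orth (stoich M)"
    and g: "\<forall>a\<in>orth (stoich M). a \<bullet> Gv M x1 = a \<bullet> Gv M x2"
  shows "x1 = x2"
proof -
  define w where "w = lnv x1 - lnv x2"
  define T1 where "T1 = (\<Sum>j\<in>UNIV. (ln (x1$j) - ln (x2$j)) * (x1$j - x2$j))"
  define T2 where "T2 = (\<Sum>i<nreac M. rate M i * delay M i *
     ((exp (src M i \<bullet> lnv x1) - exp (src M i \<bullet> lnv x2)) * (src M i \<bullet> lnv x1 - src M i \<bullet> lnv x2)))"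
  have "0 = w \<bullet> (Gv M x1 - Gv M x2)" using g w by (simp add: w_def inner_diff_right)
  also have "\<dots> = T1 + T2"
  proof -
    have a: "w \<bullet> (x1 - x2) = T1" by (simp add: w_def T1_def inner_vec_def lnv_def)
    have b: "w \<bullet> ((\<Sum>i<nreac M. (rate M i * delay M i * mpow x1 (src M i)) *\<^sub>R src M i) -
        (\<Sum>i<nreac M. (rate M i * delay M i * mpow x2 (src M i)) *\<^sub>R src M i)) = T2"
      unfolding T2_def inner_diff_right inner_sum_right sum_subtractf[symmetric]
      by (intro sum.cong refl) (simp add: mpow_pos[OF x1] mpow_pos[OF x2] w_def inner_diff_left
            inner_commute algebra_simps)
    have "Gv M x1 - Gv M x2 = (x1 - x2) + ((\<Sum>i<nreac M. (rate M i * delay M i * mpow x1 (src M i)) *\<^sub>R src M i) -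
        (\<Sum>i<nreac M. (rate M i * delay M i * mpow x2 (src M i)) *\<^sub>R src M i))"
      by (simp add: Gv_def)
    thus ?thesis using a b by (simp add: inner_add_right)
  qed
  finally have s: "T1 + T2 = 0" by simp
  have T1nn: "\<forall>j\<in>UNIV. 0 \<le> (ln (x1$j) - ln (x2$j)) * (x1$j - x2$j)"
    using ln_mono_prod(1) x1 x2 by blast
  have "0 \<le> T2" unfolding T2_def
    using v unfolding valid_dms_def
    by (intro sum_nonneg mult_nonneg_nonneg exp_mono_prod) auto
  moreover have "0 \<le> T1" unfolding T1_def using T1nn by (intro sum_nonneg) auto
  ultimately have "T1 = 0" using s by simp
  moreover have "T1 = 0 \<longleftrightarrow> (\<forall>j\<in>UNIV. (ln (x1$j) - ln (x2$j)) * (x1$j - x2$j) = 0)"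
    unfolding T1_def by (rule sum_nonneg_eq_0_iff) (use T1nn in auto)
  ultimately have "\<forall>j\<in>UNIV. (ln (x1$j) - ln (x2$j)) * (x1$j - x2$j) = 0" by blast
  thus ?thesis unfolding vec_eq_iff using ln_mono_prod(2)[OF x1[rule_format] x2[rule_format]] by blast
qed



lemma exp_lin_lower: assumes "0 < c" shows "c * (1 + t - ln c) \<le> exp (t::real)"
proof -
  have "1 + (t - ln c) \<le> exp (t - ln c)" by simp
  also have "exp (t - ln c) = exp t / c" using assms by (simp add: exp_diff)
  finally show ?thesis using assms by (simp add: field_simps)
qed

lemma coord_bound:
  fixes c t B :: real
  assumes c: "0 < c" and h: "exp t - c * t \<le> B"
  shows "-B/c \<le> t \<and> t \<le> (B - 2*c + 2*c*ln(2*c))/c"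
proof
  have "-B \<le> c * t" using h exp_gt_zero[of t] by linarith
  thus "-B/c \<le> t" using c by (simp add: field_simps)
next
  have "(2*c) * (1 + t - ln (2*c)) \<le> exp t" using c by (intro exp_lin_lower) simp
  hence "c * t \<le> B - 2*c + 2*c*ln(2*c)" using h by (simp add: algebra_simps)
  thus "t \<le> (B - 2*c + 2*c*ln(2*c))/c" using c by (simp add: field_simps)
qed

lemma test_deriv:
  fixes u0 a c :: "real^'n::finite"
  shows "((\<lambda>t. (\<Sum>j\<in>UNIV. exp (u0$j + t * a$j)) + (\<Sum>i<r. k i * exp (s i \<bullet> u0 + t * (s i \<bullet> a)))
      - (c \<bullet> u0 + t * (c \<bullet> a))) has_real_derivative
      ((\<Sum>j\<in>UNIV. exp (u0$j) * a$j) + (\<Sum>i<r. k i * exp (s i \<bullet> u0) * (s i \<bullet> a)) - c \<bullet> a)) (at 0)"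
  by (auto intro!: derivative_eq_intros simp: ac_simps)

lemma exist_core:
  assumes v: "valid_dms \<tau> M" and cb: "complex_balanced M xb" and c: "\<forall>j. 0 < c$j"
  shows "\<exists>u. u - lnv xb \<in> orth (stoich M) \<and> (\<forall>a\<in>orth (stoich M). a \<bullet> Gv M (expv u) = a \<bullet> c)"
proof -
  define ub where "ub = lnv xb"
  define r where "r = nreac M"
  define k where "k i = rate M i * delay M i" for i
  define E where "E u = (\<Sum>i<r. k i * exp (src M i \<bullet> u))" for u
  define \<phi> where "\<phi> u = (\<Sum>j\<in>UNIV. exp (u$j)) + E u - c \<bullet> u" for u
  define h where "h j t = exp t - c$j * t" for j t
  define P where "P u \<longleftrightarrow> (\<forall>i<r. (u - ub) \<bullet> (prd M i - src M i) = 0)" for u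
  have knn: "\<And>i. i<r \<Longrightarrow> 0 \<le> k i" using v by (auto simp: valid_dms_def k_def r_def)
  have Enn: "0 \<le> E u" for u unfolding E_def using knn by (intro sum_nonneg) auto
  have \<phi>h: "\<phi> u = (\<Sum>j\<in>UNIV. h j (u$j)) + E u" for u
    by (simp add: \<phi>_def h_def inner_vec_def sum_subtractf algebra_simps)
  define m where "m j = c$j - c$j * ln (c$j)" for j
  have hm: "m j \<le> h j t" for j t
    using exp_lin_lower[of "c$j" t] c by (simp add: m_def h_def algebra_simps)
  define Bd where "Bd j = m j + \<phi> ub - (\<Sum>l\<in>UNIV. m l)" for j
  define K where "K = {u. P u \<and> \<phi> u \<le> \<phi> ub}"
  have hb: "h j (u$j) \<le> Bd j" if "u \<in> K" for u j
  proof -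
    have "h j (u$j) - m j \<le> (\<Sum>l\<in>UNIV. h l (u$l) - m l)"
      by (rule member_le_sum) (use hm in auto)
    also have "\<dots> = (\<Sum>l\<in>UNIV. h l (u$l)) - (\<Sum>l\<in>UNIV. m l)" by (simp add: sum_subtractf)
    also have "\<dots> \<le> \<phi> u - (\<Sum>l\<in>UNIV. m l)" using Enn[of u] \<phi>h[of u] by simp
    also have "\<dots> \<le> \<phi> ub - (\<Sum>l\<in>UNIV. m l)" using that by (simp add: K_def)
    finally show ?thesis by (simp add: Bd_def)
  qed
  define lo where "lo = (\<chi> j. - Bd j / c$j)"
  define hi where "hi = (\<chi> j. (Bd j - 2*c$j + 2*c$j*ln(2*c$j))/c$j)"
  have "K \<subseteq> cbox lo hi"
  proof
    fix u assume "u \<in> K"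
    hence "\<forall>j. lo$j \<le> u$j \<and> u$j \<le> hi$j"
      using coord_bound[of "c$_" "u$_" "Bd _"] hb c unfolding h_def lo_def hi_def by auto
    thus "u \<in> cbox lo hi" by (simp add: mem_box_cart)
  qed
  hence bK: "bounded K" using bounded_cbox bounded_subset by blast
  have contE: "continuous_on UNIV E" unfolding E_def by (intro continuous_intros)
  have cont\<phi>: "continuous_on UNIV \<phi>" unfolding \<phi>_def
    by (intro continuous_intros contE continuous_on_component)
  have cP: "closed {u. P u}"
  proof -
    have "{u. P u} = (\<Inter>i\<in>{..<r}. {u. (u - ub) \<bullet> (prd M i - src M i) = 0})"
      by (auto simp: P_def)
    also have "closed \<dots>"
      by (intro closed_INT ballI closed_Collect_eq continuous_intros)
    finally show ?thesis .
  qed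
  have cK: "closed K"
  proof -
    have "K = {u. P u} \<inter> {u. \<phi> u \<le> \<phi> ub}" by (auto simp: K_def)
    also have "closed \<dots>"
      by (intro closed_Int cP closed_Collect_le cont\<phi> continuous_intros)
    finally show ?thesis .
  qed
  have "compact K" using bK cK by (simp add: compact_eq_bounded_closed)
  moreover have "ub \<in> K" by (simp add: K_def P_def)
  moreover have "continuous_on K \<phi>" using cont\<phi> by (rule continuous_on_subset) simp
  ultimately obtain u0 where u0K: "u0 \<in> K" and u0min: "\<forall>y\<in>K. \<phi> u0 \<le> \<phi> y"
    using continuous_attains_inf[of K \<phi>] by blast
  have glob: "\<phi> u0 \<le> \<phi> u" if "P u" for u
  proof (cases "\<phi> u \<le> \<phi> ub")
    case True thus ?thesis using u0min that by (auto simp: K_def)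
  next
    case False thus ?thesis using u0min \<open>ub \<in> K\<close> by force
  qed
  have "P u0" using u0K by (simp add: K_def)
  hence orth0: "u0 - lnv xb \<in> orth (stoich M)" by (simp add: orth_stoich P_def ub_def r_def)
  have "a \<bullet> Gv M (expv u0) = a \<bullet> c" if a: "a \<in> orth (stoich M)" for a
  proof -
    have av: "\<And>i. i < r \<Longrightarrow> a \<bullet> (prd M i - src M i) = 0" using a by (simp add: orth_stoich r_def)
    define g where "g t = (\<Sum>j\<in>UNIV. exp (u0$j + t * a$j)) + (\<Sum>i<r. k i * exp (src M i \<bullet> u0 + t * (src M i \<bullet> a)))
      - (c \<bullet> u0 + t * (c \<bullet> a))" for t
    define D where "D = (\<Sum>j\<in>UNIV. exp (u0$j) * a$j) + (\<Sum>i<r. k i * exp (src M i \<bullet> u0) * (src M i \<bullet> a)) - c \<bullet> a"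
    have g\<phi>: "g t = \<phi> (u0 + t *\<^sub>R a)" for t
      by (simp add: g_def \<phi>_def E_def inner_add_right inner_scaleR_right algebra_simps)
    have der: "(g has_real_derivative D) (at 0)"
      unfolding g_def D_def by (rule test_deriv)
    have "P (u0 + t *\<^sub>R a)" for t
      using \<open>P u0\<close> av by (simp add: P_def algebra_simps inner_diff_left inner_add_left)
    hence "\<forall>y. \<bar>0 - y\<bar> < 1 \<longrightarrow> g 0 \<le> g y" using glob by (simp add: g\<phi>)
    hence "D = 0" using DERIV_local_min[OF der, of 1] by simp
    moreover have "a \<bullet> Gv M (expv u0) = D + c \<bullet> a"
    proof -
      have e1: "a \<bullet> expv u0 = (\<Sum>j\<in>UNIV. exp (u0$j) * a$j)"
        by (simp add: inner_vec_def expv_def mult_ac)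
      have e2: "a \<bullet> (\<Sum>i<nreac M. (rate M i * delay M i * mpow (expv u0) (src M i)) *\<^sub>R src M i)
          = (\<Sum>i<r. k i * exp (src M i \<bullet> u0) * (src M i \<bullet> a))"
        unfolding inner_sum_right r_def
        by (intro sum.cong refl) (simp add: mpow_expv k_def inner_commute)
      show ?thesis unfolding Gv_def inner_add_right e1 e2 D_def by (simp add: inner_commute)
    qed
    ultimately show ?thesis by (simp add: inner_commute)
  qed
  thus ?thesis using orth0 by blast
qed



lemma int_mpow_nn: "0 \<le> integral S (\<lambda>s. mpow (f s) y)"
proof (cases "(\<lambda>s. mpow (f s) y) integrable_on S")
  case True thus ?thesis by (rule integral_nonneg) (simp add: mpow_nonneg)
next
  case False thus ?thesis by (simp add: not_integrable_integral)
qed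

lemma orth_diff: "a \<in> orth (stoich M) \<Longrightarrow> b \<in> orth (stoich M) \<Longrightarrow> a - b \<in> orth (stoich M)"
  by (simp add: orth_stoich inner_diff_left)

lemma const_Cnn: "\<forall>j. 0 < x $ j \<Longrightarrow> (\<lambda>_. x) \<in> Cnn \<tau>"
  by (auto simp: Cnn_def less_imp_le)

lemma core:
  assumes d: "DCB \<tau> Mt" and th: "\<forall>j. 0 < \<theta>t 0 $ j"
  shows "\<exists>!x. pos_equilibrium Mt x \<and> (\<lambda>_. x) \<in> compat_class \<tau> Mt \<theta>t"
proof -
  have v: "valid_dms \<tau> Mt" using d by (simp add: DCB_def)
  obtain xb where cb: "complex_balanced Mt xb" using d by (auto simp: DCB_def)
  define cv where "cv = \<theta>t 0 + (\<Sum>i<nreac Mt.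
      (rate Mt i * integral {- delay Mt i..0} (\<lambda>s. mpow (\<theta>t s) (src Mt i))) *\<^sub>R src Mt i)"
  have cfth: "cfun Mt a \<theta>t = a \<bullet> cv" for a by (simp add: cfun_def cv_def)
  have cpos: "\<forall>j. 0 < cv $ j"
  proof
    fix j
    have "0 \<le> (\<Sum>i<nreac Mt. (rate Mt i * integral {- delay Mt i..0} (\<lambda>s. mpow (\<theta>t s) (src Mt i))) * src Mt i $ j)"
      using v unfolding valid_dms_def
      by (intro sum_nonneg mult_nonneg_nonneg int_mpow_nn) (auto simp: less_imp_le)
    thus "0 < cv $ j" using th[rule_format, of j] by (simp add: cv_def)
  qed
  have P_iff: "pos_equilibrium Mt x \<and> (\<lambda>_. x) \<in> compat_class \<tau> Mt \<theta>t \<longleftrightarrow>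
      (\<forall>j. 0 < x $ j) \<and> eqsum Mt x = 0 \<and> (\<forall>a\<in>orth (stoich Mt). a \<bullet> Gv Mt x = a \<bullet> cv)" for x
    by (auto simp: pos_eq_alt compat_class_def const_Cnn cfun_const[OF v] cfth)
  obtain u where u1: "u - lnv xb \<in> orth (stoich Mt)" and u2: "\<forall>a\<in>orth (stoich Mt). a \<bullet> Gv Mt (expv u) = a \<bullet> cv"
    using exist_core[OF v cb cpos] by blast
  have ex: "pos_equilibrium Mt (expv u) \<and> (\<lambda>_. expv u) \<in> compat_class \<tau> Mt \<theta>t"
    unfolding P_iff using eq_from_orth[OF cb u1] u2 by (simp add: expv_def)
  have un: "x1 = x2" if "pos_equilibrium Mt x1 \<and> (\<lambda>_. x1) \<in> compat_class \<tau> Mt \<theta>t"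
      "pos_equilibrium Mt x2 \<and> (\<lambda>_. x2) \<in> compat_class \<tau> Mt \<theta>t" for x1 x2
  proof -
    have h1: "(\<forall>j. 0 < x1 $ j) \<and> eqsum Mt x1 = 0 \<and> (\<forall>a\<in>orth (stoich Mt). a \<bullet> Gv Mt x1 = a \<bullet> cv)"
      using that(1) P_iff by blast
    have h2: "(\<forall>j. 0 < x2 $ j) \<and> eqsum Mt x2 = 0 \<and> (\<forall>a\<in>orth (stoich Mt). a \<bullet> Gv Mt x2 = a \<bullet> cv)"
      using that(2) P_iff by blast
    have o1: "lnv x1 - lnv xb \<in> orth (stoich Mt)"
      using orth_from_eq[OF cb v, of "lnv x1"] h1 by (simp add: expv_lnv)
    have o2: "lnv x2 - lnv xb \<in> orth (stoich Mt)"
      using orth_from_eq[OF cb v, of "lnv x2"] h2 by (simp add: expv_lnv)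
    have "lnv x1 - lnv x2 \<in> orth (stoich Mt)" using orth_diff[OF o1 o2] by simp
    thus ?thesis using uniq_core[OF v] h1 h2 by simp
  qed
  show ?thesis using ex un by blast
qed



lemma diag_inv1: "\<forall>j. 0 < q $ j \<Longrightarrow> diagmul q (diagmul (\<chi> j. inverse (q $ j)) z) = z"
  by (simp add: diagmul_def vec_eq_iff less_imp_neq[symmetric])

lemma diag_inv2: "\<forall>j. 0 < q $ j \<Longrightarrow> diagmul (\<chi> j. inverse (q $ j)) (diagmul q z) = z"
  by (simp add: diagmul_def vec_eq_iff less_imp_neq[symmetric])

lemma diag_pos: "\<forall>j. 0 < q $ j \<Longrightarrow> (\<forall>j. 0 < diagmul q z $ j) \<longleftrightarrow> (\<forall>j. 0 < z $ j)"
  by (simp add: diagmul_def zero_less_mult_iff) (meson less_asym)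


lemma diag_zero: "\<forall>j. 0 < q $ j \<Longrightarrow> diagmul q z = 0 \<longleftrightarrow> z = 0"
  by (simp add: diagmul_def vec_eq_iff less_imp_neq[symmetric])

lemma rhs_const: "rhs M (\<lambda>_. z) = eqsum M z"
  unfolding rhs_def eqsum_def by (intro sum.cong refl) (simp add: scaleR_diff_right)

lemma conj_eq:
  assumes lc: "lin_conj \<tau> M Mt q"
  shows "pos_equilibrium M z \<longleftrightarrow> pos_equilibrium Mt (diagmul (\<chi> j. inverse (q $ j)) z)"
proof -
  define qi where "qi = (\<chi> j. inverse (q $ j))"
  have q: "\<forall>j. 0 < q $ j" using lc by (simp add: lin_conj_def)
  have qi: "\<forall>j. 0 < qi $ j" using q by (simp add: qi_def)
  show ?thesis
  proof (cases "\<forall>j. 0 < z $ j")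
    case True
    define x where "x = diagmul qi z"
    have xp: "\<forall>j. 0 < x $ j" using diag_pos[OF qi] True by (simp add: x_def)
    have "(\<lambda>s. x) \<in> Cpos \<tau>" using xp by (simp add: Cpos_def)
    hence "rhs M (\<lambda>s. diagmul q x) = diagmul q (rhs Mt (\<lambda>s. x))" using lc by (simp add: lin_conj_def)
    moreover have "diagmul q x = z" using diag_inv1[OF q] by (simp add: x_def qi_def)
    ultimately have "eqsum M z = diagmul q (eqsum Mt x)" by (simp add: rhs_const)
    thus ?thesis using True xp diag_zero[OF q] by (simp add: pos_eq_alt x_def qi_def)
  next
    case False
    hence "\<not> (\<forall>j. 0 < diagmul qi z $ j)" using diag_pos[OF qi] by simp
    thus ?thesis using False by (auto simp: pos_eq_alt qi_def)
  qed
qed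

lemma mpow_scale:
  assumes v: "\<forall>j. 0 \<le> v $ j" and q: "\<forall>j. 0 < q $ j"
  shows "mpow (diagmul (\<chi> j. inverse (q $ j)) v) y = mpow v y * (\<Prod>j\<in>UNIV. q $ j powr (- (y $ j)))"
  unfolding mpow_def prod.distrib[symmetric]
proof (intro prod.cong refl)
  fix j
  have qj: "q $ j \<noteq> 0" using q[rule_format, of j] by simp
  show "(if y $ j = 0 then 1 else diagmul (\<chi> j. inverse (q $ j)) v $ j powr y $ j) =
        (if y $ j = 0 then 1 else v $ j powr y $ j) * q $ j powr - y $ j"
    using qj by (auto simp: diagmul_def powr_mult inverse_powr powr_minus)
qed

lemma inner_diag: "diagmul (\<chi> j. inverse (q $ j)) b \<bullet> z = b \<bullet> diagmul (\<chi> j. inverse (q $ j)) z"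
  by (simp add: inner_vec_def diagmul_def mult_ac)

lemma inner_diag2: "\<forall>j. 0 < q $ j \<Longrightarrow> diagmul (\<chi> j. inverse (q $ j)) b \<bullet> diagmul q z = b \<bullet> z"
proof -
  assume q: "\<forall>j. 0 < q $ j"
  show ?thesis unfolding inner_vec_def diagmul_def
  proof (simp, intro sum.cong refl)
    fix i have "q $ i \<noteq> 0" using q[rule_format, of i] by simp
    thus "inverse (q $ i) * b $ i * (q $ i * z $ i) = b $ i * z $ i" by (simp add: field_simps)
  qed
qed

lemma hfun_eq:
  assumes v: "valid_dms \<tau> Mt" and q: "\<forall>j. 0 < q $ j"
    and psi: "\<forall>s\<in>{-\<tau>..0}. \<forall>j. 0 \<le> \<psi> s $ j"
  shows "hfun Mt q (diagmul (\<chi> j. inverse (q $ j)) b) \<psi> = cfun Mt b (\<lambda>s. diagmul (\<chi> j. inverse (q $ j)) (\<psi> s))"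
proof -
  define qi where "qi = (\<chi> j. inverse (q $ j))"
  have int: "rate Mt i * (\<Prod>j\<in>UNIV. q $ j powr (- (src Mt i $ j))) *
        integral {- delay Mt i..0} (\<lambda>s. mpow (\<psi> s) (src Mt i)) =
      rate Mt i * integral {- delay Mt i..0} (\<lambda>s. mpow (diagmul qi (\<psi> s)) (src Mt i))"
    if i: "i < nreac Mt" for i
  proof -
    have "integral {- delay Mt i..0} (\<lambda>s. mpow (diagmul qi (\<psi> s)) (src Mt i)) =
       integral {- delay Mt i..0} (\<lambda>s. mpow (\<psi> s) (src Mt i) * (\<Prod>j\<in>UNIV. q $ j powr (- (src Mt i $ j))))"
    proof (rule integral_cong)
      fix s assume s: "s \<in> {- delay Mt i..0}"
      hence "s \<in> {-\<tau>..0}" using v i by (auto simp: valid_dms_def)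
      thus "mpow (diagmul qi (\<psi> s)) (src Mt i) = mpow (\<psi> s) (src Mt i) * (\<Prod>j\<in>UNIV. q $ j powr (- (src Mt i $ j)))"
        unfolding qi_def using psi q by (intro mpow_scale) auto
    qed
    thus ?thesis by simp
  qed
  have "hfun Mt q (diagmul qi b) \<psi> =
     b \<bullet> diagmul qi (\<psi> 0) + (\<Sum>i<nreac Mt. (rate Mt i * (\<Prod>j\<in>UNIV. q $ j powr (- (src Mt i $ j))) *
        integral {- delay Mt i..0} (\<lambda>s. mpow (\<psi> s) (src Mt i))) * (b \<bullet> src Mt i))"
    unfolding hfun_def inner_add_right inner_sum_right inner_scaleR_right qi_def inner_diag inner_diag2[OF q]
    by (simp add: diag_inv2[OF q])
  also have "\<dots> = b \<bullet> diagmul qi (\<psi> 0) + (\<Sum>i<nreac Mt. (rate Mt i *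
        integral {- delay Mt i..0} (\<lambda>s. mpow (diagmul qi (\<psi> s)) (src Mt i))) * (b \<bullet> src Mt i))"
    using int by (intro arg_cong2[where f="(+)"] refl sum.cong) auto
  also have "\<dots> = cfun Mt b (\<lambda>s. diagmul qi (\<psi> s))"
    unfolding cfun_def inner_add_right inner_sum_right inner_scaleR_right by simp
  finally show ?thesis by (simp add: qi_def)
qed

lemma Hset_iff:
  assumes v: "valid_dms \<tau> Mt" and q: "\<forall>j. 0 < q $ j" and th: "\<theta> \<in> Cpos \<tau>"
    and z: "\<forall>j. 0 < z $ j"
  shows "(\<lambda>_. z) \<in> Hset \<tau> Mt q \<theta> \<longleftrightarrow>
     (\<lambda>_. diagmul (\<chi> j. inverse (q $ j)) z) \<in> compat_class \<tau> Mt (\<lambda>s. diagmul (\<chi> j. inverse (q $ j)) (\<theta> s))"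
proof -
  define qi where "qi = (\<chi> j. inverse (q $ j))"
  have qi: "\<forall>j. 0 < qi $ j" using q by (simp add: qi_def)
  have thn: "\<forall>s\<in>{-\<tau>..0}. \<forall>j. 0 \<le> \<theta> s $ j" using th by (auto simp: Cpos_def less_imp_le)
  have zn: "\<forall>s\<in>{-\<tau>..0}. \<forall>j. 0 \<le> (\<lambda>_. z) s $ j" using z by (auto simp: less_imp_le)
  have zp: "\<forall>j. 0 < diagmul qi z $ j" using diag_pos[OF qi] z by simp
  have "(\<lambda>_. z) \<in> Hset \<tau> Mt q \<theta> \<longleftrightarrow>
      (\<forall>b\<in>orth (stoich Mt). hfun Mt q (diagmul qi b) (\<lambda>_. z) = hfun Mt q (diagmul qi b) \<theta>)"
    using const_Cnn[OF z] by (auto simp: Hset_def qi_def)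
  also have "\<dots> \<longleftrightarrow> (\<forall>b\<in>orth (stoich Mt). cfun Mt b (\<lambda>_. diagmul qi z) = cfun Mt b (\<lambda>s. diagmul qi (\<theta> s)))"
    unfolding qi_def hfun_eq[OF v q thn] hfun_eq[OF v q zn] by simp
  also have "\<dots> \<longleftrightarrow> (\<lambda>_. diagmul qi z) \<in> compat_class \<tau> Mt (\<lambda>s. diagmul qi (\<theta> s))"
    using const_Cnn[OF zp] by (auto simp: compat_class_def)
  finally show ?thesis by (simp add: qi_def)
qed

theorem mainTheorem4:
  fixes M Mt :: "'n::finite dms" and q :: "real^'n" and \<tau> :: real
    and \<theta> :: "real \<Rightarrow> real^'n"
  assumes "valid_dms \<tau> M"
    and "DCB \<tau> Mt"
    and "lin_conj \<tau> M Mt q"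
    and "\<theta> \<in> Cpos \<tau>"
  shows "(\<exists>!x. pos_equilibrium M x \<and> (\<lambda>_. x) \<in> Hset \<tau> Mt q \<theta>) \<and>
         (\<forall>x xt. pos_equilibrium M x \<and> (\<lambda>_. x) \<in> Hset \<tau> Mt q \<theta> \<and>
            pos_equilibrium Mt xt \<and>
            (\<lambda>_. xt) \<in> compat_class \<tau> Mt (\<lambda>s. diagmul (\<chi> j. inverse (q $ j)) (\<theta> s))
            \<longrightarrow> x = diagmul q xt)"
proof -
  define qi where "qi = (\<chi> j. inverse (q $ j))"
  define tht where "tht = (\<lambda>s. diagmul qi (\<theta> s))"
  have v: "valid_dms \<tau> Mt" using assms(2) by (simp add: DCB_def)
  have q: "\<forall>j. 0 < q $ j" using assms(3) by (simp add: lin_conj_def)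
  have qi: "\<forall>j. 0 < qi $ j" using q by (simp add: qi_def)
  have "0 \<in> {-\<tau>..0}" using v by (simp add: valid_dms_def)
  hence "\<forall>j. 0 < \<theta> 0 $ j" using assms(4) by (simp add: Cpos_def)
  hence "\<forall>j. 0 < tht 0 $ j" using diag_pos[OF qi] by (simp add: tht_def)
  define Core where "Core x \<longleftrightarrow> pos_equilibrium Mt x \<and> (\<lambda>_. x) \<in> compat_class \<tau> Mt tht" for x
  have cu: "\<exists>!x. Core x" unfolding Core_def by (rule core[OF assms(2)]) fact
  have red: "pos_equilibrium M z \<and> (\<lambda>_. z) \<in> Hset \<tau> Mt q \<theta> \<longleftrightarrow> Core (diagmul qi z)" for z
  proof (cases "\<forall>j. 0 < z $ j")
    case True
    show ?thesis unfolding Core_def tht_def qi_def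
      using conj_eq[OF assms(3)] Hset_iff[OF v q assms(4) True] by blast
  next
    case False
    thus ?thesis using conj_eq[OF assms(3), of z]
      by (auto simp: Core_def pos_equilibrium_def qi_def)
  qed
  obtain xt0 where x0: "Core xt0" and x0u: "\<And>y. Core y \<Longrightarrow> y = xt0" using cu by blast
  have A: "\<exists>!x. pos_equilibrium M x \<and> (\<lambda>_. x) \<in> Hset \<tau> Mt q \<theta>"
  proof
    show "pos_equilibrium M (diagmul q xt0) \<and> (\<lambda>_. diagmul q xt0) \<in> Hset \<tau> Mt q \<theta>"
      unfolding red qi_def diag_inv2[OF q] using x0 .
  next
    fix z assume "pos_equilibrium M z \<and> (\<lambda>_. z) \<in> Hset \<tau> Mt q \<theta>"
    hence "diagmul qi z = xt0" using red x0u by blast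
    thus "z = diagmul q xt0" using diag_inv1[OF q] by (metis qi_def)
  qed
  have B: "x = diagmul q xt" if "pos_equilibrium M x \<and> (\<lambda>_. x) \<in> Hset \<tau> Mt q \<theta>"
    "pos_equilibrium Mt xt" "(\<lambda>_. xt) \<in> compat_class \<tau> Mt (\<lambda>s. diagmul (\<chi> j. inverse (q $ j)) (\<theta> s))"
    for x xt
  proof -
    have "Core xt" using that(2,3) by (simp add: Core_def tht_def qi_def)
    moreover have "Core (diagmul qi x)" using that(1) red by blast
    ultimately have "diagmul qi x = xt" using x0u by blast
    thus ?thesis using diag_inv1[OF q] by (metis qi_def)
  qed
  show ?thesis using A B by blast
qed

end
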